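(* Let $\alpha=(n_1,m_1,\dots,n_p,m_p)\in\mathbb Z_{\ge0}^{2p}$ and $a=(a_{hk})\in I(\alpha)$. Then for all $i,j=1,\dots,p$, $$a_{ip}=n_i-\sum_{k=1}^{p-1}a_{ik},\qquad a_{pj}=m_j-\sum_{h=1}^{p-1}a_{hj},\qquad a_{pp}=n_p-\sum_{k=1}^{p-1}m_k+\sum_{h,k=1}^{p-1}a_{hk}.$$
   Context: $I(\alpha)$ is the set of $a=(a_{11},\dots,a_{1p},a_{21},\dots,a_{pp})\in\mathbb Z_{\ge0}^{p^2}$ with $l_{ij}(\alpha,a)\le a_{ij}\le L_{ij}(\alpha,a)$ for all $i,j=1,\dots,p$, where $$l_{ij}(\alpha,a)=\max\Big(0,\ \sum_{h=1}^i n_h-\sum_{h=j+1}^p m_h-\sum_{\substack{h\le i,\,k\le j\\ (h,k)\neq(i,j)}}a_{hk}\Big),\qquad L_{ij}(\alpha,a)=\min\Big(n_i-\sum_{h=1}^{j-1}a_{ih},\ m_j-\sum_{h=1}^{i-1}a_{hj}\Big).$$ (The paper writes $\wedge$ for this max and $\vee$ for this min.) *)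

theory Defs
  imports Main
begin

text \<open>alpha = (n_1,m_1,...,n_p,m_p) is encoded by p and two functions n m :: nat => nat,
  of which only the values at 1..p matter. A vector a in Z_{>=0}^{p^2} is encoded as a
  function a :: nat => nat => nat with a h k = a_{hk}, vanishing outside {1..p} x {1..p}.\<close>

definition low_bd :: "nat \<Rightarrow> (nat \<Rightarrow> nat) \<Rightarrow> (nat \<Rightarrow> nat) \<Rightarrow> (nat \<Rightarrow> nat \<Rightarrow> nat) \<Rightarrow> nat \<Rightarrow> nat \<Rightarrow> int" where
  "low_bd p n m a i j =
     max 0 ((\<Sum>h=1..i. int (n h)) - (\<Sum>h=j+1..p. int (m h))
            - (\<Sum>(h,k)\<in>({1..i} \<times> {1..j}) - {(i,j)}. int (a h k)))"

definition up_bd :: "nat \<Rightarrow> (nat \<Rightarrow> nat) \<Rightarrow> (nat \<Rightarrow> nat) \<Rightarrow> (nat \<Rightarrow> nat \<Rightarrow> nat) \<Rightarrow> nat \<Rightarrow> nat \<Rightarrow> int" where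
  "up_bd p n m a i j =
     min (int (n i) - (\<Sum>h=1..j-1. int (a i h))) (int (m j) - (\<Sum>h=1..i-1. int (a h j)))"

definition I_set :: "nat \<Rightarrow> (nat \<Rightarrow> nat) \<Rightarrow> (nat \<Rightarrow> nat) \<Rightarrow> (nat \<Rightarrow> nat \<Rightarrow> nat) set" where
  "I_set p n m = {a. (\<forall>i j. (i \<notin> {1..p} \<or> j \<notin> {1..p}) \<longrightarrow> a i j = 0) \<and>
     (\<forall>i\<in>{1..p}. \<forall>j\<in>{1..p}. low_bd p n m a i j \<le> int (a i j) \<and> int (a i j) \<le> up_bd p n m a i j)}"

end

theory Submission
  imports Defs
begin

lemma sum_last_p: "(p::nat) \<ge> 1 \<Longrightarrow> (\<Sum>k=1..p. f k :: int) = (\<Sum>k=1..p-1. f k) + f p"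
proof -
  assume "p \<ge> 1" then obtain q where "p = Suc q" by (cases p) auto
  then show ?thesis by simp
qed

lemma rect_sum: fixes i j :: nat shows "(\<Sum>(h,k)\<in>({1..i} \<times> {1..j}) - {(i,j)}. int (a h k))
   = (\<Sum>h=1..i. \<Sum>k=1..j. int (a h k)) - (if i \<ge> 1 \<and> j \<ge> 1 then int (a i j) else 0)"
proof -
  have f: "finite ({1..i} \<times> {1..j})" by simp
  have "(\<Sum>(h,k)\<in>({1..i} \<times> {1..j}) - {(i,j)}. int (a h k))
      = (\<Sum>(h,k)\<in>({1..i} \<times> {1..j}). int (a h k)) - (if (i,j) \<in> {1..i} \<times> {1..j} then int (a i j) else 0)"
    using sum_diff1[OF f, of "\<lambda>(h,k). int (a h k)" "(i,j)"] by (auto split: if_splits)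
  also have "(\<Sum>(h,k)\<in>({1..i} \<times> {1..j}). int (a h k)) = (\<Sum>h=1..i. \<Sum>k=1..j. int (a h k))"
    by (simp add: sum.cartesian_product)
  finally show ?thesis by auto
qed

theorem propositionA3:
  fixes p :: nat and n m :: "nat \<Rightarrow> nat" and a :: "nat \<Rightarrow> nat \<Rightarrow> nat"
  assumes "p \<ge> 1"
    and "(\<Sum>h=1..p. n h) = (\<Sum>h=1..p. m h)"
    and "a \<in> I_set p n m"
  shows "(\<forall>i\<in>{1..p}. int (a i p) = int (n i) - (\<Sum>k=1..p-1. int (a i k)))
       \<and> (\<forall>j\<in>{1..p}. int (a p j) = int (m j) - (\<Sum>h=1..p-1. int (a h j)))
       \<and> int (a p p) = int (n p) - (\<Sum>k=1..p-1. int (m k))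
                       + (\<Sum>h=1..p-1. \<Sum>k=1..p-1. int (a h k))"
proof -
  have B: "\<And>i j. i \<in> {1..p} \<Longrightarrow> j \<in> {1..p} \<Longrightarrow>
     (\<Sum>h=1..i. int (n h)) - (\<Sum>h=j+1..p. int (m h))
            - (\<Sum>(h,k)\<in>({1..i} \<times> {1..j}) - {(i,j)}. int (a h k)) \<le> int (a i j)
     \<and> int (a i j) \<le> int (n i) - (\<Sum>h=1..j-1. int (a i h))
     \<and> int (a i j) \<le> int (m j) - (\<Sum>h=1..i-1. int (a h j))"
    using assms(3) unfolding I_set_def low_bd_def up_bd_def by fastforce
  have nm: "(\<Sum>h=1..p. int (n h)) = (\<Sum>h=1..p. int (m h))"
    using assms(2) by (metis of_nat_sum)
  have rows: "i \<le> p \<Longrightarrow> \<forall>h\<in>{1..i}. (\<Sum>k=1..p. int (a h k)) = int (n h)" for i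
  proof (induction i)
    case 0 then show ?case by simp
  next
    case (Suc i)
    then have IH: "\<forall>h\<in>{1..i}. (\<Sum>k=1..p. int (a h k)) = int (n h)" by simp
    have S: "(\<Sum>h=1..i. \<Sum>k=1..p. int (a h k)) = (\<Sum>h=1..i. int (n h))"
      using IH by (intro sum.cong) auto
    have b: "Suc i \<in> {1..p}" "p \<in> {1..p}" using Suc.prems assms(1) by auto
    note bb = B[OF b]
    have r: "(\<Sum>(h,k)\<in>({1..Suc i} \<times> {1..p}) - {(Suc i,p)}. int (a h k))
      = (\<Sum>h=1..i. int (n h)) + (\<Sum>k=1..p. int (a (Suc i) k)) - int (a (Suc i) p)"
    proof -
      have "(\<Sum>h=1..Suc i. \<Sum>k=1..p. int (a h k)) = (\<Sum>h=1..i. \<Sum>k=1..p. int (a h k)) + (\<Sum>k=1..p. int (a (Suc i) k))"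
        by simp
      then show ?thesis using assms(1) S by (simp only: rect_sum) simp
    qed
    have "(\<Sum>k=1..p. int (a (Suc i) k)) = int (n (Suc i))"
      using bb r sum_last_p[OF assms(1), of "\<lambda>k. int (a (Suc i) k)"] by simp
    then show ?case using IH by (auto simp: le_Suc_eq)
  qed
  have R: "\<forall>i\<in>{1..p}. int (a i p) = int (n i) - (\<Sum>k=1..p-1. int (a i k))"
  proof
    fix i assume i: "i \<in> {1..p}"
    then have "(\<Sum>k=1..p. int (a i k)) = int (n i)" using rows[of p] by auto
    then show "int (a i p) = int (n i) - (\<Sum>k=1..p-1. int (a i k))"
      using sum_last_p[OF assms(1), of "\<lambda>k. int (a i k)"] by simp
  qed
  have cols: "j \<le> p \<Longrightarrow> \<forall>k\<in>{1..j}. (\<Sum>h=1..p. int (a h k)) = int (m k)" for j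
  proof (induction j)
    case 0 then show ?case by simp
  next
    case (Suc j)
    then have IH: "\<forall>k\<in>{1..j}. (\<Sum>h=1..p. int (a h k)) = int (m k)" by simp
    have S: "(\<Sum>h=1..p. \<Sum>k=1..Suc j. int (a h k)) = (\<Sum>k=1..Suc j. \<Sum>h=1..p. int (a h k))"
      by (rule sum.swap)
    also have "\<dots> = (\<Sum>k=1..j. int (m k)) + (\<Sum>h=1..p. int (a h (Suc j)))"
      using IH by simp
    finally have S: "(\<Sum>h=1..p. \<Sum>k=1..Suc j. int (a h k)) = (\<Sum>k=1..j. int (m k)) + (\<Sum>h=1..p. int (a h (Suc j)))" .
    have b: "p \<in> {1..p}" "Suc j \<in> {1..p}" using Suc.prems assms(1) by auto
    note bb = B[OF b]
    have split: "(\<Sum>h=1..p. int (m h)) = (\<Sum>h=1..Suc j. int (m h)) + (\<Sum>h=Suc j+1..p. int (m h))"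
      using Suc.prems sum.ub_add_nat[of 1 "Suc j" "\<lambda>h. int (m h)" "p - Suc j"] by simp
    have r: "(\<Sum>(h,k)\<in>({1..p} \<times> {1..Suc j}) - {(p,Suc j)}. int (a h k))
      = (\<Sum>k=1..j. int (m k)) + (\<Sum>h=1..p. int (a h (Suc j))) - int (a p (Suc j))"
      using assms(1) S by (simp only: rect_sum) simp
    have "(\<Sum>h=1..p. int (a h (Suc j))) = int (m (Suc j))"
      using bb r split nm sum_last_p[OF assms(1), of "\<lambda>h. int (a h (Suc j))"] by simp
    then show ?case using IH by (auto simp: le_Suc_eq)
  qed
  have C: "\<forall>j\<in>{1..p}. int (a p j) = int (m j) - (\<Sum>h=1..p-1. int (a h j))"
  proof
    fix j assume j: "j \<in> {1..p}"
    then have "(\<Sum>h=1..p. int (a h j)) = int (m j)" using cols[of p] by auto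
    then show "int (a p j) = int (m j) - (\<Sum>h=1..p-1. int (a h j))"
      using sum_last_p[OF assms(1), of "\<lambda>h. int (a h j)"] by simp
  qed
  have pp: "p \<in> {1..p}" using assms(1) by simp
  have "int (a p p) = int (n p) - (\<Sum>k=1..p-1. int (a p k))" using R pp by blast
  also have "(\<Sum>k=1..p-1. int (a p k)) = (\<Sum>k=1..p-1. int (m k) - (\<Sum>h=1..p-1. int (a h k)))"
    using C by (intro sum.cong) auto
  also have "\<dots> = (\<Sum>k=1..p-1. int (m k)) - (\<Sum>h=1..p-1. \<Sum>k=1..p-1. int (a h k))"
    by (simp add: sum_subtractf) (rule sum.swap)
  finally have P: "int (a p p) = int (n p) - (\<Sum>k=1..p-1. int (m k)) + (\<Sum>h=1..p-1. \<Sum>k=1..p-1. int (a h k))"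
    by simp
  show ?thesis using R C P by blast
qed

end
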